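(* Let $k\ge 1$ be an integer and let $G$ be a graph with minimum degree $\delta(G)\ge k$. Then $G$ has a total $k$-coalition partition.
   Context: All graphs are finite, simple and connected. $N(v)$ denotes the open neighborhood of a vertex $v$. For a graph $G$ with $\delta(G)\ge k$, a set $S\subseteq V(G)$ is a total $k$-dominating set if $|N(v)\cap S|\ge k$ for every $v\in V(G)$. Two disjoint sets $U,W\subseteq V(G)$ form a total $k$-coalition if neither $U$ nor $W$ is a total $k$-dominating set, but $U\cup W$ is a total $k$-dominating set. A total $k$-coalition partition of $G$ is a partition $\Omega=\{V_1,\dots,V_{|\Omega|}\}$ of $V(G)$ such that every $V_i$ forms a total $k$-coalition with some other set $V_j\in\Omega$. *)

theory Defs
  imports Main
begin

definition simple_graph :: "'a set \<Rightarrow> ('a \<Rightarrow> 'a \<Rightarrow> bool) \<Rightarrow> bool" where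
  "simple_graph V E \<longleftrightarrow> finite V \<and> V \<noteq> {} \<and>
     (\<forall>u v. E u v \<longrightarrow> u \<in> V \<and> v \<in> V) \<and>
     (\<forall>u v. E u v \<longrightarrow> E v u) \<and> (\<forall>v. \<not> E v v)"

definition connected_graph :: "'a set \<Rightarrow> ('a \<Rightarrow> 'a \<Rightarrow> bool) \<Rightarrow> bool" where
  "connected_graph V E \<longleftrightarrow> simple_graph V E \<and> (\<forall>u\<in>V. \<forall>v\<in>V. E\<^sup>*\<^sup>* u v)"

definition nbhd :: "('a \<Rightarrow> 'a \<Rightarrow> bool) \<Rightarrow> 'a \<Rightarrow> 'a set" where
  "nbhd E v = {u. E v u}"

definition min_degree_ge :: "'a set \<Rightarrow> ('a \<Rightarrow> 'a \<Rightarrow> bool) \<Rightarrow> nat \<Rightarrow> bool" where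
  "min_degree_ge V E k \<longleftrightarrow> (\<forall>v\<in>V. card (nbhd E v) \<ge> k)"

definition total_k_dominating :: "'a set \<Rightarrow> ('a \<Rightarrow> 'a \<Rightarrow> bool) \<Rightarrow> nat \<Rightarrow> 'a set \<Rightarrow> bool" where
  "total_k_dominating V E k S \<longleftrightarrow> S \<subseteq> V \<and> (\<forall>v\<in>V. card (nbhd E v \<inter> S) \<ge> k)"

definition total_k_coalition :: "'a set \<Rightarrow> ('a \<Rightarrow> 'a \<Rightarrow> bool) \<Rightarrow> nat \<Rightarrow> 'a set \<Rightarrow> 'a set \<Rightarrow> bool" where
  "total_k_coalition V E k U W \<longleftrightarrow> U \<inter> W = {} \<and>
     \<not> total_k_dominating V E k U \<and> \<not> total_k_dominating V E k W \<and>
     total_k_dominating V E k (U \<union> W)"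

definition is_partition :: "'a set \<Rightarrow> 'a set set \<Rightarrow> bool" where
  "is_partition V P \<longleftrightarrow> \<Union>P = V \<and> {} \<notin> P \<and>
     (\<forall>X\<in>P. \<forall>Y\<in>P. X \<noteq> Y \<longrightarrow> X \<inter> Y = {})"

definition total_k_coalition_partition ::
  "'a set \<Rightarrow> ('a \<Rightarrow> 'a \<Rightarrow> bool) \<Rightarrow> nat \<Rightarrow> 'a set set \<Rightarrow> bool" where
  "total_k_coalition_partition V E k P \<longleftrightarrow> is_partition V P \<and>
     (\<forall>X\<in>P. \<exists>Y\<in>P. Y \<noteq> X \<and> total_k_coalition V E k X Y)"

end

theory Submission
  imports Defs
begin

theorem proposition2p1:
  fixes V :: "'a set" and E :: "'a \<Rightarrow> 'a \<Rightarrow> bool" and k :: nat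
  assumes "k \<ge> 1"
    and "connected_graph V E"
    and "min_degree_ge V E k"
  shows "\<exists>P. total_k_coalition_partition V E k P"
proof -
  have sg: "simple_graph V E" using assms(2) by (simp add: connected_graph_def)
  have finV: "finite V" and neV: "V \<noteq> {}" and inV: "\<And>u v. E u v \<Longrightarrow> u \<in> V \<and> v \<in> V"
    and irr: "\<And>v. \<not> E v v" using sg by (auto simp: simple_graph_def)
  have nbV: "nbhd E v \<subseteq> V" for v using inV by (auto simp: nbhd_def)
  have tkdV: "total_k_dominating V E k V"
    using assms(3) nbV unfolding total_k_dominating_def min_degree_ge_def
    by (simp add: Int_absorb2[OF nbV])
  define Q where "Q = (\<lambda>P. is_partition V P \<and> (\<forall>X\<in>P. \<not> total_k_dominating V E k X))"
  have "Q ((\<lambda>v. {v}) ` V)"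
  proof -
    have "\<not> total_k_dominating V E k {v}" if "v \<in> V" for v
    proof -
      have "nbhd E v \<inter> {v} = {}" using irr by (auto simp: nbhd_def)
      then show ?thesis using that assms(1) unfolding total_k_dominating_def by force
    qed
    then show ?thesis unfolding Q_def is_partition_def by auto
  qed
  then obtain P where QP: "Q P" and minP: "\<And>P'. Q P' \<Longrightarrow> card P \<le> card P'"
    using ex_has_least_nat[of Q _ card] by metis
  have partP: "is_partition V P" and ndP: "\<And>X. X \<in> P \<Longrightarrow> \<not> total_k_dominating V E k X"
    using QP by (auto simp: Q_def)
  have unP: "\<Union>P = V" and neP: "{} \<notin> P" and dj: "\<And>A B. A \<in> P \<Longrightarrow> B \<in> P \<Longrightarrow> A \<noteq> B \<Longrightarrow> A \<inter> B = {}"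
    using partP unfolding is_partition_def by auto
  have PsubV: "P \<subseteq> Pow V" using partP by (auto simp: is_partition_def)
  have finP: "finite P" using PsubV finV by (meson finite_Pow_iff finite_subset)
  have "\<exists>Y\<in>P. Y \<noteq> X \<and> total_k_coalition V E k X Y" if XP: "X \<in> P" for X
  proof -
    have "P \<noteq> {X}"
    proof
      assume "P = {X}"
      then have "X = V" using unP by simp
      then show False using ndP[OF XP] tkdV by simp
    qed
    then obtain Y where YP: "Y \<in> P" and YX: "Y \<noteq> X" using XP by blast
    have disj: "X \<inter> Y = {}" using dj XP YP YX by blast
    have "total_k_dominating V E k (X \<union> Y)"
    proof (rule ccontr)
      assume nd: "\<not> total_k_dominating V E k (X \<union> Y)"
      define P' where "P' = insert (X \<union> Y) (P - {X, Y})"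
      have XYnot: "X \<union> Y \<notin> P - {X, Y}"
      proof
        assume as: "X \<union> Y \<in> P - {X, Y}"
        have h1: "X \<union> Y \<in> P" and h2: "X \<union> Y \<noteq> X" using as by auto
        have "(X \<union> Y) \<inter> X = {}" using dj[OF h1 XP h2] .
        then have "X = {}" by blast
        then show False using XP neP by simp
      qed
      have "Q P'"
        unfolding Q_def P'_def is_partition_def
      proof (intro conjI)
        show "\<Union> (insert (X \<union> Y) (P - {X, Y})) = V"
          using unP XP YP by blast
        show "{} \<notin> insert (X \<union> Y) (P - {X, Y})"
          using neP XP by auto
        show "\<forall>A\<in>insert (X \<union> Y) (P - {X, Y}). \<forall>B\<in>insert (X \<union> Y) (P - {X, Y}). A \<noteq> B \<longrightarrow> A \<inter> B = {}"
        proof (intro ballI impI)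
          fix A B assume A: "A \<in> insert (X \<union> Y) (P - {X, Y})" and B: "B \<in> insert (X \<union> Y) (P - {X, Y})" and AB: "A \<noteq> B"
          show "A \<inter> B = {}"
          proof (cases "A = X \<union> Y")
            case True
            then have "B \<in> P" "B \<noteq> X" "B \<noteq> Y" using A B AB by auto
            then have "B \<inter> X = {}" "B \<inter> Y = {}" using dj XP YP by blast+
            then show ?thesis using True by blast
          next
            case False
            then have A': "A \<in> P" "A \<noteq> X" "A \<noteq> Y" using A by auto
            show ?thesis
            proof (cases "B = X \<union> Y")
              case True
              then have "A \<inter> X = {}" "A \<inter> Y = {}" using dj XP YP A' by blast+
              then show ?thesis using True by blast
            next
              case False
              then have "B \<in> P" using B by auto
              then show ?thesis using dj A' AB by blast
            qed
          qed
        qed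
        show "\<forall>A\<in>insert (X \<union> Y) (P - {X, Y}). \<not> total_k_dominating V E k A"
          using nd ndP by blast
      qed
      have "card P' = card (P - {X, Y}) + 1"
        unfolding P'_def using XYnot finP by simp
      also have "card (P - {X, Y}) = card P - 2"
        using finP XP YP YX by (simp add: card_Diff_subset)
      finally have c1: "card P' = card P - 2 + 1" .
      have "card {X, Y} \<le> card P" using finP XP YP by (intro card_mono) auto
      moreover have "card {X, Y} = 2" using YX by simp
      ultimately have "card P' < card P" using c1 by linarith
      then show False using minP[OF \<open>Q P'\<close>] by simp
    qed
    then show ?thesis using YP YX disj ndP[OF XP] ndP[OF YP]
      unfolding total_k_coalition_def by blast
  qed
  then show ?thesis using partP unfolding total_k_coalition_partition_def by blast
qed

end
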